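(* For each integer $n\ge 2$ let $a_{1,n},\dots,a_{n,n}>0$ with $\sum_{i=1}^n a_{i,n}=n$, and suppose there exists $M\ge 1$ such that $a_{i,n}\le M$ for all $n\ge 2$ and all $i=1,\dots,n$. Let $\gamma$ be Euler's constant. Then for every $\varepsilon>0$ there exists $\delta>0$ such that for every $s\in(-\delta,\delta)\setminus\{0\}$ and every integer $n\ge 2$, $$(1-\varepsilon)e^{-\gamma}<\left(\prod_{i=1}^n\Gamma(1+a_{i,n}s)\right)^{1/(sn)}<(1+\varepsilon)e^{-\gamma}.$$
   Context: $\Gamma$ is the Gamma function. *)

theory Defs
  imports "HOL-Analysis.Analysis"
begin

end

theory Submission
  imports Defs
begin

lemma lnG_lim: "(\<lambda>h::real. ln_Gamma (1 + h) / h) \<midarrow>0\<rightarrow> - euler_mascheroni"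
proof -
  have "(ln_Gamma has_field_derivative Digamma (1::real)) (at 1)"
    by (rule has_field_derivative_ln_Gamma_real) simp
  hence "(\<lambda>h. (ln_Gamma (1 + h) - ln_Gamma (1::real)) / h) \<midarrow>0\<rightarrow> Digamma (1::real)"
    by (simp add: DERIV_def)
  moreover have "ln_Gamma (1::real) = 0" by (simp add: ln_Gamma_real_pos)
  ultimately show ?thesis by simp
qed

lemma exp_bounds:
  fixes E \<epsilon> :: real
  assumes "\<epsilon> > 0" "\<bar>E\<bar> < ln (1 + \<epsilon>)"
  shows "1 - \<epsilon> < exp E \<and> exp E < 1 + \<epsilon>"
proof -
  have l: "E < ln (1 + \<epsilon>)" "- ln (1 + \<epsilon>) < E" using assms(2) by linarith+
  have x: "exp (ln (1 + \<epsilon>)) = 1 + \<epsilon>" using assms(1) by (intro exp_ln) simp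
  have "exp E < exp (ln (1 + \<epsilon>))" using l(1) by (simp only: exp_less_cancel_iff)
  hence u: "exp E < 1 + \<epsilon>" using x by simp
  have "exp (- ln (1 + \<epsilon>)) < exp E" using l(2) by (simp only: exp_less_cancel_iff)
  moreover have "exp (- ln (1 + \<epsilon>)) = 1 / (1 + \<epsilon>)" using x by (simp add: exp_minus inverse_eq_divide)
  moreover have "(1 - \<epsilon>) * (1 + \<epsilon>) < 1" using assms by (simp add: algebra_simps)
  hence "1 - \<epsilon> < 1 / (1 + \<epsilon>)" using assms by (simp add: field_simps)
  ultimately show ?thesis using u by simp
qed

theorem mainTheorem8:
  fixes a :: "nat \<Rightarrow> nat \<Rightarrow> real" and M :: real
  assumes pos: "\<And>n i. n \<ge> 2 \<Longrightarrow> i \<in> {1..n} \<Longrightarrow> a i n > 0"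
    and sum: "\<And>n. n \<ge> 2 \<Longrightarrow> (\<Sum>i=1..n. a i n) = real n"
    and M: "M \<ge> 1"
    and bound: "\<And>n i. n \<ge> 2 \<Longrightarrow> i \<in> {1..n} \<Longrightarrow> a i n \<le> M"
  shows "\<forall>\<epsilon>>0. \<exists>\<delta>>0. \<forall>s. s \<in> {-\<delta><..<\<delta>} - {0} \<longrightarrow> (\<forall>n\<ge>2.
           (1 - \<epsilon>) * exp (- euler_mascheroni) <
             (\<Prod>i=1..n. Gamma (1 + a i n * s)) powr (1 / (s * real n)) \<and>
           (\<Prod>i=1..n. Gamma (1 + a i n * s)) powr (1 / (s * real n)) <
             (1 + \<epsilon>) * exp (- euler_mascheroni))"
proof (intro allI impI)
  fix \<epsilon> :: real assume e: "\<epsilon> > 0"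
  define \<eta> where "\<eta> = ln (1 + \<epsilon>)"
  have eta: "\<eta> > 0" using e by (simp add: \<eta>_def)
  obtain \<rho> where rho: "\<rho> > 0" and
    rhoP: "\<And>h::real. h \<noteq> 0 \<and> norm (h - 0) < \<rho> \<Longrightarrow>
       norm (ln_Gamma (1 + h) / h - - euler_mascheroni) < \<eta>"
    using LIM_D[OF lnG_lim eta] by blast
  define r where "r = min \<rho> 1"
  have r: "r > 0" "r \<le> \<rho>" "r \<le> 1" using rho by (auto simp: r_def)
  show "\<exists>\<delta>>0. \<forall>s. s \<in> {-\<delta><..<\<delta>} - {0} \<longrightarrow> (\<forall>n\<ge>2.
           (1 - \<epsilon>) * exp (- euler_mascheroni) <
             (\<Prod>i=1..n. Gamma (1 + a i n * s)) powr (1 / (s * real n)) \<and>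
           (\<Prod>i=1..n. Gamma (1 + a i n * s)) powr (1 / (s * real n)) <
             (1 + \<epsilon>) * exp (- euler_mascheroni))"
  proof (intro exI[of _ "r / M"] conjI allI impI)
    show "r / M > 0" using r M by simp
    fix s :: real and n :: nat
    assume s: "s \<in> {- (r / M)<..<r / M} - {0}" and n: "n \<ge> 2"
    have s0: "s \<noteq> 0" and sM: "\<bar>s\<bar> * M < r" using s M
      by (auto simp: field_simps abs_less_iff)
    define e where "e i = ln_Gamma (1 + a i n * s) / (a i n * s) + euler_mascheroni" for i
    have hi: "\<bar>a i n * s\<bar> < r" "a i n * s \<noteq> 0" if "i \<in> {1..n}" for i
    proof -
      have "\<bar>a i n * s\<bar> = a i n * \<bar>s\<bar>" using pos[OF n that] by (simp add: abs_mult)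
      also have "\<dots> \<le> M * \<bar>s\<bar>" using bound[OF n that] by (intro mult_right_mono) auto
      finally show "\<bar>a i n * s\<bar> < r" using sM by (simp add: mult.commute)
      show "a i n * s \<noteq> 0" using pos[OF n that] s0 by simp
    qed
    have ei: "\<bar>e i\<bar> < \<eta>" if "i \<in> {1..n}" for i
      using rhoP[of "a i n * s"] hi[OF that] r by (simp add: e_def)
    have gpos: "Gamma (1 + a i n * s) > 0" if "i \<in> {1..n}" for i
      using hi[OF that] r by (intro Gamma_real_pos) (auto simp: abs_less_iff)
    have lnG: "ln (Gamma (1 + a i n * s)) = a i n * s * (e i - euler_mascheroni)"
      if "i \<in> {1..n}" for i
      using hi[OF that] r gpos[OF that]
      by (simp add: e_def ln_Gamma_real_pos[symmetric] abs_less_iff)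
    define P where "P = (\<Prod>i=1..n. Gamma (1 + a i n * s))"
    have Ppos: "P > 0" unfolding P_def using gpos by (intro prod_pos) auto
    have "ln P = (\<Sum>i=1..n. ln (Gamma (1 + a i n * s)))"
      unfolding P_def by (intro ln_prod) (use gpos in force)+
    also have "\<dots> = (\<Sum>i=1..n. a i n * s * (e i - euler_mascheroni))"
      using lnG by (intro sum.cong) auto
    also have "\<dots> = s * (\<Sum>i=1..n. a i n * e i) - s * euler_mascheroni * (\<Sum>i=1..n. a i n)"
      by (simp add: sum_subtractf sum_distrib_left sum_distrib_right algebra_simps)
    also have "\<dots> = s * (\<Sum>i=1..n. a i n * e i) - s * euler_mascheroni * real n"
      using sum[OF n] by simp
    finally have lnP: "ln P = s * (\<Sum>i=1..n. a i n * e i) - s * euler_mascheroni * real n" .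
    define E where "E = (\<Sum>i=1..n. a i n * e i) / real n"
    have np: "real n > 0" using n by simp
    have "ln P / (s * real n) = E - euler_mascheroni"
      using s0 np unfolding lnP E_def by (simp add: field_simps)
    hence pw: "P powr (1 / (s * real n)) = exp (- euler_mascheroni) * exp E"
      using Ppos by (simp add: powr_def exp_diff[symmetric] exp_add[symmetric])
    have "\<bar>\<Sum>i=1..n. a i n * e i\<bar> \<le> (\<Sum>i=1..n. \<bar>a i n * e i\<bar>)" by (rule sum_abs)
    also have "\<dots> < (\<Sum>i=1..n. a i n * \<eta>)"
    proof (rule sum_strict_mono)
      show "finite {1..n}" by simp
      show "{1..n} \<noteq> {}" using n by simp
      fix i assume i: "i \<in> {1..n}"
      show "\<bar>a i n * e i\<bar> < a i n * \<eta>"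
        using pos[OF n i] ei[OF i] by (simp add: abs_mult)
    qed
    also have "\<dots> = real n * \<eta>" using sum[OF n] by (simp add: sum_distrib_right[symmetric])
    finally have "\<bar>E\<bar> < \<eta>" using np unfolding E_def by (simp add: field_simps)
    hence b: "1 - \<epsilon> < exp E \<and> exp E < 1 + \<epsilon>"
      using exp_bounds[OF e] by (simp add: \<eta>_def)
    have ex: "exp (- euler_mascheroni) > (0::real)" by simp
    show "(1 - \<epsilon>) * exp (- euler_mascheroni) <
             (\<Prod>i=1..n. Gamma (1 + a i n * s)) powr (1 / (s * real n))"
      using b ex unfolding P_def[symmetric] pw by (simp add: mult.commute)
    show "(\<Prod>i=1..n. Gamma (1 + a i n * s)) powr (1 / (s * real n)) <
             (1 + \<epsilon>) * exp (- euler_mascheroni)"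
      using b ex unfolding P_def[symmetric] pw by (simp add: mult.commute)
  qed
qed

end
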